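(* Let $(E,C)$ be a configuration structure (a set $E$ together with $C\subseteq\mathcal{P}(E)$). Define the event structure $\mathcal{E}(C)=(E,\vdash)$ by $X\vdash Y$ iff $X\cap Y=\emptyset$ and $X\cup Y\in C$ (for $X,Y\subseteq E$). Then $\mathcal{E}(C)$ is pure, and the set of left-closed configurations of $\mathcal{E}(C)$ equals $C$.
   Context: An event structure is a pair $(E,\vdash)$ with $E$ a set and $\vdash\subseteq\mathcal{P}(E)\times\mathcal{P}(E)$. It is pure if $X\vdash Y$ implies $X\cap Y=\emptyset$. A set $X\subseteq E$ is a left-closed configuration of $(E,\vdash)$ iff for every $Y\subseteq X$ there is $Z\subseteq X$ with $Z\vdash Y$. *)

theory Defs
  imports Main
begin

text \<open>An event structure on E is a relation (enabling) between subsets of E,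
  represented as a set of pairs (X, Y) meaning X enables Y.\<close>

definition event_structure :: "'a set \<Rightarrow> ('a set \<times> 'a set) set \<Rightarrow> bool" where
  "event_structure E ent \<longleftrightarrow> ent \<subseteq> Pow E \<times> Pow E"

definition pure_es :: "('a set \<times> 'a set) set \<Rightarrow> bool" where
  "pure_es ent \<longleftrightarrow> (\<forall>X Y. (X, Y) \<in> ent \<longrightarrow> X \<inter> Y = {})"

definition left_closed_config :: "'a set \<Rightarrow> ('a set \<times> 'a set) set \<Rightarrow> 'a set \<Rightarrow> bool" where
  "left_closed_config E ent X \<longleftrightarrow>
     X \<subseteq> E \<and> (\<forall>Y. Y \<subseteq> X \<longrightarrow> (\<exists>Z. Z \<subseteq> X \<and> (Z, Y) \<in> ent))"

definition es_of_config :: "'a set \<Rightarrow> 'a set set \<Rightarrow> ('a set \<times> 'a set) set" where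
  "es_of_config E C = {(X, Y). X \<subseteq> E \<and> Y \<subseteq> E \<and> X \<inter> Y = {} \<and> X \<union> Y \<in> C}"

end

theory Submission
  imports Defs
begin

theorem mainTheorem2:
  fixes E :: "'a set" and C :: "'a set set"
  assumes "C \<subseteq> Pow E"
  shows "event_structure E (es_of_config E C)
    \<and> pure_es (es_of_config E C)
    \<and> {X. left_closed_config E (es_of_config E C) X} = C"
proof (intro conjI)
  show "event_structure E (es_of_config E C)"
    by (auto simp: event_structure_def es_of_config_def)
  show "pure_es (es_of_config E C)"
    by (auto simp: pure_es_def es_of_config_def)
  show "{X. left_closed_config E (es_of_config E C) X} = C"
  proof
    show "{X. left_closed_config E (es_of_config E C) X} \<subseteq> C"
    proof
      fix X assume "X \<in> {X. left_closed_config E (es_of_config E C) X}"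
      then obtain Z where "Z \<subseteq> X" "(Z, X) \<in> es_of_config E C"
        unfolding left_closed_config_def by blast
      then show "X \<in> C" unfolding es_of_config_def
        by (metis (no_types, lifting) case_prodD mem_Collect_eq sup.absorb2)
    qed
    show "C \<subseteq> {X. left_closed_config E (es_of_config E C) X}"
    proof
      fix X assume X: "X \<in> C"
      hence XE: "X \<subseteq> E" using assms by blast
      have "\<forall>Y. Y \<subseteq> X \<longrightarrow> (\<exists>Z. Z \<subseteq> X \<and> (Z, Y) \<in> es_of_config E C)"
      proof (intro allI impI)
        fix Y assume "Y \<subseteq> X"
        hence "X - Y \<union> Y = X" by blast
        thus "\<exists>Z. Z \<subseteq> X \<and> (Z, Y) \<in> es_of_config E C"
          using X XE \<open>Y \<subseteq> X\<close>
          by (intro exI[of _ "X - Y"]) (auto simp: es_of_config_def)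
      qed
      thus "X \<in> {X. left_closed_config E (es_of_config E C) X}"
        using XE by (simp add: left_closed_config_def)
    qed
  qed
qed

end
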